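(* Let $n\ge 1$ and $k\ge 0$ be integers, let $G_n$ be the disjoint union of $n$ copies of the one-way infinite ladder, and let $M_n$ be the algebraic cycle matroid of $G_n$. Then $\mathrm{Spec}(M_n[k])=\{k,k+1,\dots,k+n\}$.
   Context: The one-way infinite ladder is the graph with vertices $u_i,w_i$ ($i\ge 1$) and edges $u_iu_{i+1}$, $w_iw_{i+1}$ and $u_iw_i$ for all $i\ge1$. For a graph $G$, an algebraic cycle is a nonempty edge set $A$ such that every vertex has even degree in the subgraph $(V(G),A)$; the algebraic cycle matroid of $G_n$ has ground set $E(G_n)$ and as independent sets the edge sets containing no algebraic cycle (this is a matroid for $G_n$). Matroids are in the sense of: $\emptyset$ independent; subsets of independent sets independent; if $B$ is maximal independent and $A$ is non-maximal independent then $A\cup\{b\}$ is independent for some $b\in B\setminus A$; for independent $A\subseteq X\subseteq E$ there is a maximal independent $S$ with $A\subseteq S\subseteq X$. Bases are maximal independent sets; the rank is the cardinality of a base (all infinite cardinalities identified). For a matroid $M=(E,\mathcal{L})$ of rank at least $k$, $M[k]=(E,\mathcal{L}[k])$ where $\mathcal{L}[k]=\{S\in\mathcal{L}: \exists T\in\mathcal{L},\ T\supseteq S,\ |T\setminus S|=k\}$; this is a matroid. The finitarization $M^{\mathrm{fin}}$ has as independent sets all sets whose finite subsets are all independent in $M$. $\mathrm{Spec}(M)=\{|F\setminus B|: B\subseteq F,\ F\text{ a base of }M^{\mathrm{fin}},\ B\text{ a base of }M\}$, with all infinite cardinalities identified with a single value $\infty$. *)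

theory Defs
  imports Main "HOL-Library.Extended_Nat"
begin

definition is_base :: "('a set \<Rightarrow> bool) \<Rightarrow> 'a set \<Rightarrow> bool" where
  "is_base I B \<longleftrightarrow> I B \<and> (\<forall>X. I X \<longrightarrow> B \<subseteq> X \<longrightarrow> X = B)"

definition trunc_indep :: "('a set \<Rightarrow> bool) \<Rightarrow> nat \<Rightarrow> 'a set \<Rightarrow> bool" where
  "trunc_indep I k S \<longleftrightarrow> I S \<and> (\<exists>T. I T \<and> S \<subseteq> T \<and> finite (T - S) \<and> card (T - S) = k)"

definition fin_indep :: "('a set \<Rightarrow> bool) \<Rightarrow> 'a set \<Rightarrow> bool" where
  "fin_indep I S \<longleftrightarrow> (\<forall>F. F \<subseteq> S \<longrightarrow> finite F \<longrightarrow> I F)"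

definition ecard :: "'a set \<Rightarrow> enat" where
  "ecard X = (if finite X then enat (card X) else \<infinity>)"

definition Spec :: "('a set \<Rightarrow> bool) \<Rightarrow> enat set" where
  "Spec I = {ecard (F - B) | F B. B \<subseteq> F \<and> is_base (fin_indep I) F \<and> is_base I B}"

datatype side = SideU | SideW
datatype ekind = RailU | RailW | Rung

text \<open>Vertex (j, i, s): copy j < n, position i (0-based, i.e. u_{i+1} / w_{i+1}), side s.
  Edge (j, i, RailU) = u_i u_{i+1}, (j, i, RailW) = w_i w_{i+1}, (j, i, Rung) = u_i w_i.\<close>
type_synonym lvertex = "nat \<times> nat \<times> side"
type_synonym ledge = "nat \<times> nat \<times> ekind"

fun ends :: "ledge \<Rightarrow> lvertex set" where
  "ends (j, i, RailU) = {(j, i, SideU), (j, Suc i, SideU)}"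
| "ends (j, i, RailW) = {(j, i, SideW), (j, Suc i, SideW)}"
| "ends (j, i, Rung) = {(j, i, SideU), (j, i, SideW)}"

definition ladder_verts :: "nat \<Rightarrow> lvertex set" where
  "ladder_verts n = {(j, i, s). j < n}"

definition ladder_edges :: "nat \<Rightarrow> ledge set" where
  "ladder_edges n = {(j, i, t). j < n}"

definition alg_cycle :: "nat \<Rightarrow> ledge set \<Rightarrow> bool" where
  "alg_cycle n A \<longleftrightarrow> A \<noteq> {} \<and> A \<subseteq> ladder_edges n \<and>
     (\<forall>v \<in> ladder_verts n. even (card {e \<in> A. v \<in> ends e}))"

definition acm_indep :: "nat \<Rightarrow> ledge set \<Rightarrow> bool" where
  "acm_indep n A \<longleftrightarrow> A \<subseteq> ladder_edges n \<and> \<not> (\<exists>C \<subseteq> A. alg_cycle n C)"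

end

theory Submission
  imports Defs
begin


lemma ends_U: "{e. (j,i,SideU) \<in> ends e} = {(j,i,RailU),(j,i,Rung)} \<union> (if i=0 then {} else {(j,i-1,RailU)})"
  apply (rule set_eqI)
  subgoal for e by (cases e; case_tac c; auto)
  done

lemma ends_W: "{e. (j,i,SideW) \<in> ends e} = {(j,i,RailW),(j,i,Rung)} \<union> (if i=0 then {} else {(j,i-1,RailW)})"
  apply (rule set_eqI)
  subgoal for e by (cases e; case_tac c; auto)
  done

lemma card3: "a \<noteq> b \<Longrightarrow> a \<noteq> c \<Longrightarrow> b \<noteq> c \<Longrightarrow> card (C \<inter> {a,b,c}) = of_bool (a\<in>C) + of_bool (b\<in>C) + of_bool (c\<in>C)"
  by (cases "a\<in>C"; cases "b\<in>C"; cases "c\<in>C") (auto simp: Int_insert_right)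

lemma card2: "a \<noteq> b \<Longrightarrow> card (C \<inter> {a,b}) = of_bool (a\<in>C) + of_bool (b\<in>C)"
  by (cases "a\<in>C"; cases "b\<in>C") (auto simp: Int_insert_right)

lemma degU: "card {e\<in>C. (j,i,SideU) \<in> ends e} = of_bool ((j,i,RailU)\<in>C) + of_bool ((j,i,Rung)\<in>C) + (if i = 0 then 0 else of_bool ((j,i-1,RailU) \<in> C))"
proof -
  have "{e\<in>C. (j,i,SideU) \<in> ends e} = C \<inter> {e. (j,i,SideU) \<in> ends e}" by auto
  then show ?thesis unfolding ends_U
    by (cases "i=0") (auto simp: card2 card3 insert_commute)
qed

lemma degW: "card {e\<in>C. (j,i,SideW) \<in> ends e} = of_bool ((j,i,RailW)\<in>C) + of_bool ((j,i,Rung)\<in>C) + (if i = 0 then 0 else of_bool ((j,i-1,RailW) \<in> C))"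
proof -
  have "{e\<in>C. (j,i,SideW) \<in> ends e} = C \<inter> {e. (j,i,SideW) \<in> ends e}" by auto
  then show ?thesis unfolding ends_W
    by (cases "i=0") (auto simp: card2 card3 insert_commute)
qed

definition evU :: "ledge set \<Rightarrow> nat \<Rightarrow> nat \<Rightarrow> bool" where
  "evU C j i \<longleftrightarrow> (((j,i,RailU)\<in>C) \<noteq> ((j,i,Rung)\<in>C) \<longleftrightarrow> (i \<noteq> 0 \<and> (j,i-1,RailU) \<in> C))"
definition evW :: "ledge set \<Rightarrow> nat \<Rightarrow> nat \<Rightarrow> bool" where
  "evW C j i \<longleftrightarrow> (((j,i,RailW)\<in>C) \<noteq> ((j,i,Rung)\<in>C) \<longleftrightarrow> (i \<noteq> 0 \<and> (j,i-1,RailW) \<in> C))"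

lemma evenU: "even (card {e\<in>C. (j,i,SideU) \<in> ends e}) \<longleftrightarrow> evU C j i"
  unfolding degU evU_def by (cases "i=0") auto

lemma evenW: "even (card {e\<in>C. (j,i,SideW) \<in> ends e}) \<longleftrightarrow> evW C j i"
  unfolding degW evW_def by (cases "i=0") auto

lemma alg_cycle_iff: "alg_cycle n C \<longleftrightarrow> C \<noteq> {} \<and> C \<subseteq> ladder_edges n \<and> (\<forall>j<n. \<forall>i. evU C j i \<and> evW C j i)"
proof -
  have "(\<forall>v \<in> ladder_verts n. even (card {e \<in> C. v \<in> ends e})) \<longleftrightarrow> (\<forall>j<n. \<forall>i. evU C j i \<and> evW C j i)"
  proof
    assume H: "\<forall>v \<in> ladder_verts n. even (card {e \<in> C. v \<in> ends e})"
    show "\<forall>j<n. \<forall>i. evU C j i \<and> evW C j i"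
    proof (intro allI impI conjI)
      fix j i assume "j < n"
      then show "evU C j i" using H[rule_format, of "(j,i,SideU)"] evenU by (auto simp: ladder_verts_def)
      show "evW C j i" using H[rule_format, of "(j,i,SideW)"] evenW \<open>j<n\<close> by (auto simp: ladder_verts_def)
    qed
  next
    assume H: "\<forall>j<n. \<forall>i. evU C j i \<and> evW C j i"
    show "\<forall>v \<in> ladder_verts n. even (card {e \<in> C. v \<in> ends e})"
    proof
      fix v assume "v \<in> ladder_verts n"
      then obtain j i s where v: "v = (j,i,s)" "j < n" by (auto simp: ladder_verts_def)
      show "even (card {e \<in> C. v \<in> ends e})"
        using H v evenU evenW by (cases s) auto
    qed
  qed
  then show ?thesis unfolding alg_cycle_def by blast
qed

lemma mem_edges[simp]: "(j,i,t) \<in> ladder_edges n \<longleftrightarrow> j < n"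
  by (simp add: ladder_edges_def)

definition forest :: "nat \<Rightarrow> ledge set \<Rightarrow> bool" where
  "forest n F \<longleftrightarrow> F \<subseteq> ladder_edges n \<and> (\<forall>C. C \<subseteq> F \<longrightarrow> finite C \<longrightarrow> \<not> alg_cycle n C)"

definition lad :: "nat \<Rightarrow> ledge set" where "lad j = {e. fst e = j}"

lemma evU_sd: "evU A j i \<Longrightarrow> evU B j i \<Longrightarrow> evU ((A - B) \<union> (B - A)) j i"
  unfolding evU_def by auto
lemma evW_sd: "evW A j i \<Longrightarrow> evW B j i \<Longrightarrow> evW ((A - B) \<union> (B - A)) j i"
  unfolding evW_def by auto

lemma alg_cycle_sd: "alg_cycle n A \<Longrightarrow> alg_cycle n B \<Longrightarrow> (A - B) \<union> (B - A) \<noteq> {} \<Longrightarrow> alg_cycle n ((A - B) \<union> (B - A))"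
  unfolding alg_cycle_iff using evU_sd evW_sd by blast

lemma alg_cycle_restrict:
  assumes "alg_cycle n A" "(j,i,t) \<in> A"
  shows "alg_cycle n (A \<inter> lad j)"
  unfolding alg_cycle_iff
proof (intro conjI)
  show "A \<inter> lad j \<noteq> {}" using assms(2) by (auto simp: lad_def)
  show "A \<inter> lad j \<subseteq> ladder_edges n" using assms(1) by (auto simp: alg_cycle_iff)
  have H: "\<forall>j<n. \<forall>i. evU A j i \<and> evW A j i" using assms(1) by (auto simp: alg_cycle_iff)
  show "\<forall>j'<n. \<forall>i. evU (A \<inter> lad j) j' i \<and> evW (A \<inter> lad j) j' i"
  proof (intro allI impI)
    fix j' i assume "j' < n"
    show "evU (A \<inter> lad j) j' i \<and> evW (A \<inter> lad j) j' i"
    proof (cases "j' = j")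
      case True then show ?thesis using H \<open>j'<n\<close> by (auto simp: evU_def evW_def lad_def)
    next
      case False then show ?thesis by (auto simp: evU_def evW_def lad_def)
    qed
  qed
qed

lemma BN:
  assumes "\<forall>i. evU C j i \<and> evW C j i"
  shows "(j,N,RailU) \<in> C \<longleftrightarrow> (j,N,RailW) \<in> C"
proof (induction N)
  case 0 then show ?case using assms[rule_format, of 0] by (auto simp: evU_def evW_def)
next
  case (Suc N) then show ?case using assms[rule_format, of "Suc N"] by (auto simp: evU_def evW_def)
qed

lemma norung_empty:
  assumes "\<forall>i. evU C j i \<and> evW C j i" "\<forall>i. (j,i,Rung) \<notin> C"
  shows "(j,i,RailU) \<notin> C \<and> (j,i,RailW) \<notin> C"
proof (induction i)
  case 0 then show ?case using assms(1)[rule_format, of 0] assms(2) by (auto simp: evU_def evW_def)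
next
  case (Suc i) then show ?case using assms(1)[rule_format, of "Suc i"] assms(2) by (auto simp: evU_def evW_def)
qed

lemma noW_empty:
  assumes "\<forall>i. evU C j i \<and> evW C j i" "\<forall>i. (j,i,RailW) \<notin> C"
  shows "(j,i,t) \<notin> C"
proof -
  have "(j,i,RailU) \<notin> C" using BN[OF assms(1)] assms(2) by blast
  moreover have "(j,i,Rung) \<notin> C" using assms(1)[rule_format, of i] assms(2) by (auto simp: evW_def)
  ultimately show ?thesis using assms(2) by (cases t) auto
qed

lemma maxpos:
  assumes "finite C" "\<forall>i. evU C j i \<and> evW C j i" "(j,q,t) \<in> C"
  shows "\<exists>p>0. (j,p,Rung) \<in> C \<and> (j,p-1,RailU) \<in> C \<and> (j,p-1,RailW) \<in> C"
proof -
  define P where "P = {i. \<exists>t. (j,i,t) \<in> C}"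
  have "P \<subseteq> (\<lambda>e. fst (snd e)) ` C" unfolding P_def by force
  then have fP: "finite P" using assms(1) finite_surj by blast
  define p where "p = Max P"
  have qP: "q \<in> P" using assms(3) P_def by blast
  have pP: "p \<in> P" using fP qP p_def Max_in by blast
  have gt: "(j,i,t') \<notin> C" if "i > p" for i t'
    using Max_ge[OF fP, of i] that P_def p_def by auto
  have rU: "(j,p,RailU) \<notin> C" using assms(2)[rule_format, of "Suc p"] gt[of "Suc p"] by (auto simp: evU_def)
  have rW: "(j,p,RailW) \<notin> C" using assms(2)[rule_format, of "Suc p"] gt[of "Suc p"] by (auto simp: evW_def)
  obtain t' where t': "(j,p,t') \<in> C" using pP P_def by auto
  have rg: "(j,p,Rung) \<in> C" using t' rU rW by (cases t') auto
  show ?thesis using assms(2)[rule_format, of p] rU rW rg by (auto simp: evU_def evW_def)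
qed

lemma finite_ekind: "finite (UNIV :: ekind set)"
proof -
  have U: "(UNIV :: ekind set) = {RailU, RailW, Rung}" using ekind.exhaust by auto
  show ?thesis unfolding U by simp
qed

lemma finite_upto: "finite {e::ledge. fst e = j \<and> fst (snd e) \<le> N}"
proof -
  have "{e::ledge. fst e = j \<and> fst (snd e) \<le> N} \<subseteq> (\<lambda>(i,t). (j,i,t)) ` ({..N} \<times> UNIV)" by force
  then show ?thesis using finite_ekind finite_subset by blast
qed

lemma rails_tail:
  assumes F: "forest n F" and CF: "C \<subseteq> F" and ac: "alg_cycle n C" and Cj: "C \<subseteq> lad j"
    and e: "(j,p,t) \<in> C" and pN: "p \<le> N"
  shows "(j,N,RailU) \<in> C \<and> (j,N,RailW) \<in> C"
proof (rule ccontr)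
  assume nn: "\<not> ?thesis"
  have jn: "j < n" using ac e by (auto simp: alg_cycle_iff)
  have H: "\<forall>j<n. \<forall>i. evU C j i \<and> evW C j i" using ac by (auto simp: alg_cycle_iff)
  have nU: "(j,N,RailU) \<notin> C" and nW: "(j,N,RailW) \<notin> C" using nn BN H jn by blast+
  define CN where "CN = {e\<in>C. fst (snd e) < N \<or> (fst (snd e) = N \<and> snd (snd e) = Rung)}"
  have "alg_cycle n CN"
    unfolding alg_cycle_iff
  proof (intro conjI)
    show "CN \<noteq> {}" using e pN nU nW unfolding CN_def by (cases t) (auto simp: le_less)
    show "CN \<subseteq> ladder_edges n" using ac unfolding CN_def alg_cycle_iff by auto
    show "\<forall>j'<n. \<forall>i. evU CN j' i \<and> evW CN j' i"
    proof (intro allI impI)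
      fix j' i assume "j' < n"
      show "evU CN j' i \<and> evW CN j' i"
      proof (cases "j' = j")
        case False then show ?thesis using Cj by (auto simp: evU_def evW_def lad_def CN_def)
      next
        case True
        have "i < N \<or> i = N \<or> i = Suc N \<or> i > Suc N" by arith
        then show ?thesis using H[rule_format, OF \<open>j'<n\<close>, of i] True nU nW
          by (auto simp: evU_def evW_def CN_def)
      qed
    qed
  qed
  moreover have "finite CN"
    by (rule finite_subset[OF _ finite_upto[of j N]]) (use Cj in \<open>auto simp: CN_def lad_def\<close>)
  moreover have "CN \<subseteq> F" using CF CN_def by auto
  ultimately show False using F unfolding forest_def by blast
qed

lemma unique_cycle:
  assumes F: "forest n F" and C1: "alg_cycle n C1" "C1 \<subseteq> F" "C1 \<subseteq> lad j"
    and C2: "alg_cycle n C2" "C2 \<subseteq> F" "C2 \<subseteq> lad j"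
  shows "C1 = C2"
proof (rule ccontr)
  assume ne: "C1 \<noteq> C2"
  define D where "D = (C1 - C2) \<union> (C2 - C1)"
  have Dne: "D \<noteq> {}" using ne D_def by auto
  have D: "alg_cycle n D" "D \<subseteq> F" "D \<subseteq> lad j" using alg_cycle_sd[OF C1(1) C2(1)] Dne C1 C2 D_def by auto
  obtain e1 where "e1 \<in> C1" using C1 by (auto simp: alg_cycle_def)
  then obtain p1 t1 where 1: "(j,p1,t1) \<in> C1" using C1(3) by (cases e1) (auto simp: lad_def)
  obtain e2 where "e2 \<in> C2" using C2 by (auto simp: alg_cycle_def)
  then obtain p2 t2 where 2: "(j,p2,t2) \<in> C2" using C2(3) by (cases e2) (auto simp: lad_def)
  obtain e3 where "e3 \<in> D" using Dne by auto
  then obtain p3 t3 where 3: "(j,p3,t3) \<in> D" using D(3) by (cases e3) (auto simp: lad_def)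
  have "(j,p1+p2+p3,RailU) \<in> C1" using rails_tail[OF F C1(2,1,3) 1] by simp
  moreover have "(j,p1+p2+p3,RailU) \<in> C2" using rails_tail[OF F C2(2,1,3) 2] by simp
  moreover have "(j,p1+p2+p3,RailU) \<in> D" using rails_tail[OF F D(2,1,3) 3] by simp
  ultimately show False using D_def by auto
qed



lemma acm_mono: "acm_indep n B \<Longrightarrow> A \<subseteq> B \<Longrightarrow> acm_indep n A"
  unfolding acm_indep_def by blast

lemma extend:
  assumes n: "n \<ge> 1" and fY: "finite Y" and iY: "acm_indep n Y"
  shows "trunc_indep (acm_indep n) k Y"
proof -
  have "finite ((\<lambda>e. fst (snd e)) ` Y)" using fY by simp
  then obtain N where N: "(\<lambda>e. fst (snd e)) ` Y \<subseteq> {..<N}" using finite_nat_bounded by blast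
  have Npos: "(j,i,t) \<in> Y \<Longrightarrow> i < N" for j i t using N by force
  define K where "K = (\<lambda>i. (0::nat, Suc N + i, Rung)) ` {..<k}"
  have KY: "K \<inter> Y = {}" using Npos unfolding K_def by force
  have cK: "card K = k" unfolding K_def by (subst card_image) (auto simp: inj_on_def)
  have "acm_indep n (Y \<union> K)"
    unfolding acm_indep_def
  proof (intro conjI notI)
    show "Y \<union> K \<subseteq> ladder_edges n" using iY n unfolding acm_indep_def K_def by auto
  next
    assume "\<exists>C\<subseteq>Y \<union> K. alg_cycle n C"
    then obtain C where C: "C \<subseteq> Y \<union> K" "alg_cycle n C" by blast
    show False
    proof (cases "C \<inter> K = {}")
      case True then have "C \<subseteq> Y" using C by blast
      then show False using iY C unfolding acm_indep_def by blast
    next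
      case False
      then obtain i where i: "i < k" "(0, Suc N + i, Rung) \<in> C" unfolding K_def by auto
      have "evU C 0 (Suc N + i)" using C(2) n unfolding alg_cycle_iff by auto
      moreover have "(0, Suc N + i, RailU) \<notin> C" using C(1) Npos unfolding K_def by fastforce
      moreover have "(0, N + i, RailU) \<notin> C" using C(1) Npos unfolding K_def by fastforce
      ultimately show False using i by (auto simp: evU_def)
    qed
  qed
  moreover have "(Y \<union> K) - Y = K" using KY by blast
  moreover have "finite K" unfolding K_def by simp
  ultimately show ?thesis unfolding trunc_indep_def using iY cK by (metis sup_ge1)
qed

lemma fin_indep_iff:
  assumes n: "n \<ge> 1"
  shows "fin_indep (trunc_indep (acm_indep n) k) S \<longleftrightarrow> forest n S"
proof
  assume H: "fin_indep (trunc_indep (acm_indep n) k) S"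
  have "S \<subseteq> ladder_edges n"
  proof
    fix e assume "e \<in> S"
    then have "trunc_indep (acm_indep n) k {e}" using H unfolding fin_indep_def by simp
    then show "e \<in> ladder_edges n" unfolding trunc_indep_def acm_indep_def by simp
  qed
  moreover have "\<not> alg_cycle n C" if "C \<subseteq> S" "finite C" for C
  proof -
    have "trunc_indep (acm_indep n) k C" using H that unfolding fin_indep_def by simp
    then have "acm_indep n C" unfolding trunc_indep_def by simp
    then show ?thesis unfolding acm_indep_def by auto
  qed
  ultimately show "forest n S" unfolding forest_def by blast
next
  assume H: "forest n S"
  show "fin_indep (trunc_indep (acm_indep n) k) S"
    unfolding fin_indep_def
  proof (intro allI impI)
    fix F assume F: "F \<subseteq> S" "finite F"
    have "F \<subseteq> ladder_edges n" using H F(1) unfolding forest_def by blast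
    moreover have "\<not> alg_cycle n C" if "C \<subseteq> F" for C
    proof -
      have "finite C" using that F(2) finite_subset by auto
      moreover have "C \<subseteq> S" using that F(1) by simp
      ultimately show ?thesis using H unfolding forest_def by simp
    qed
    ultimately have "acm_indep n F" unfolding acm_indep_def by auto
    then show "trunc_indep (acm_indep n) k F" using extend[OF n F(2)] by simp
  qed
qed

lemma base_noext:
  assumes B: "is_base (trunc_indep (acm_indep n) k) S" and X: "X \<inter> S = {}" "finite X" "card X = Suc k"
  shows "\<not> acm_indep n (S \<union> X)"
proof
  assume iSX: "acm_indep n (S \<union> X)"
  have "X \<noteq> {}" using X(3) by auto
  then obtain x where x: "x \<in> X" by blast
  have "trunc_indep (acm_indep n) k (insert x S)"
    unfolding trunc_indep_def
  proof (intro conjI exI)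
    show "acm_indep n (insert x S)" by (rule acm_mono[OF iSX]) (use x in blast)
    show "acm_indep n (S \<union> X)" by fact
    show "insert x S \<subseteq> S \<union> X" using x by blast
    have "S \<union> X - insert x S = X - {x}" using X by blast
    then show "finite (S \<union> X - insert x S)" "card (S \<union> X - insert x S) = k" using X x by auto
  qed
  then have "insert x S = S" using B unfolding is_base_def by blast
  then show False using x X by blast
qed

lemma base_intro:
  assumes T: "trunc_indep (acm_indep n) k S"
    and H: "\<And>X. X \<inter> S = {} \<Longrightarrow> finite X \<Longrightarrow> card X = Suc k \<Longrightarrow> \<not> acm_indep n (S \<union> X)"
  shows "is_base (trunc_indep (acm_indep n) k) S"
  unfolding is_base_def
proof (intro conjI allI impI T)
  fix X assume X: "trunc_indep (acm_indep n) k X" "S \<subseteq> X"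
  show "X = S"
  proof (rule ccontr)
    assume "X \<noteq> S"
    then obtain x where x: "x \<in> X" "x \<notin> S" using X by blast
    obtain T where T: "acm_indep n T" "X \<subseteq> T" "finite (T - X)" "card (T - X) = k"
      using X unfolding trunc_indep_def by blast
    define X0 where "X0 = insert x (T - X)"
    have "X0 \<inter> S = {}" using x X(2) X0_def by blast
    moreover have "finite X0" using T X0_def by simp
    moreover have "card X0 = Suc k" using T x X0_def by simp
    moreover have "acm_indep n (S \<union> X0)" by (rule acm_mono[OF T(1)]) (use T x X(2) X0_def in blast)
    ultimately show False using H by blast
  qed
qed

lemma exch_aux:
  assumes "finite Q"
  shows "(\<forall>f\<in>Q. \<exists>A. alg_cycle n A \<and> A \<subseteq> insert f Y) \<Longrightarrow> x \<notin> Y \<Longrightarrow> x \<notin> Q \<Longrightarrow> acm_indep n Y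
    \<Longrightarrow> G \<subseteq> Y \<union> Q \<union> {x} \<Longrightarrow> x \<in> G \<Longrightarrow> alg_cycle n G \<Longrightarrow> \<exists>G'. alg_cycle n G' \<and> G' \<subseteq> insert x Y"
  using assms
proof (induction Q arbitrary: G rule: finite_induct)
  case empty then show ?case by blast
next
  case (insert f Q)
  show ?case
  proof (cases "f \<in> G")
    case False
    then have "G \<subseteq> Y \<union> Q \<union> {x}" using insert.prems(5) by blast
    then show ?thesis using insert.IH[of G] insert.prems by simp
  next
    case True
    obtain A where A: "alg_cycle n A" "A \<subseteq> insert f Y" using insert.prems(1) by blast
    have fA: "f \<in> A" using A insert.prems(4) unfolding acm_indep_def by blast
    define G' where "G' = (G - A) \<union> (A - G)"
    have xA: "x \<notin> A" using A insert.prems(2,3) by blast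
    have "alg_cycle n G'" using alg_cycle_sd[OF insert.prems(7) A(1)] xA insert.prems(6) G'_def by blast
    moreover have "G' \<subseteq> Y \<union> Q \<union> {x}" using insert.prems(5) A(2) fA True G'_def by blast
    moreover have "x \<in> G'" using xA insert.prems(6) G'_def by blast
    ultimately show ?thesis using insert.IH[of G'] insert.prems(1,2,3,4) by simp
  qed
qed

lemma exchange:
  assumes F: "forest n F" and Fmax: "\<forall>x\<in>ladder_edges n - F. \<exists>C. finite C \<and> C \<subseteq> insert x F \<and> alg_cycle n C"
    and SF: "S \<subseteq> F"
  shows "finite X \<Longrightarrow> X \<inter> S = {} \<Longrightarrow> acm_indep n (S \<union> X) \<Longrightarrow>
     \<exists>X'. X' \<subseteq> F - S \<and> finite X' \<and> card X' = card X \<and> acm_indep n (S \<union> X')"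
proof (induction "card (X - F)" arbitrary: X rule: less_induct)
  case less
  show ?case
  proof (cases "X \<subseteq> F")
    case True
    then have "X \<subseteq> F - S" using less.prems(2) by blast
    then show ?thesis using less.prems by blast
  next
    case False
    then obtain x where x: "x \<in> X" "x \<notin> F" by blast
    have xE: "x \<in> ladder_edges n" using less.prems(3) x unfolding acm_indep_def by blast
    obtain C where C: "finite C" "C \<subseteq> insert x F" "alg_cycle n C" using Fmax xE x by blast
    have xC: "x \<in> C"
    proof (rule ccontr)
      assume "x \<notin> C"
      then have "C \<subseteq> F" using C(2) by blast
      then show False using F C(1,3) unfolding forest_def by blast
    qed
    define Y where "Y = (S \<union> X) - {x}"
    have iY: "acm_indep n Y" unfolding Y_def by (rule acm_mono[OF less.prems(3)]) blast
    have "\<exists>f\<in>C. f \<notin> Y \<and> f \<noteq> x \<and> acm_indep n (insert f Y)"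
    proof (rule ccontr)
      assume nf: "\<not> ?thesis"
      define Q where "Q = C - Y - {x}"
      have Q1: "\<forall>f\<in>Q. \<exists>A. alg_cycle n A \<and> A \<subseteq> insert f Y"
      proof
        fix f assume fQ: "f \<in> Q"
        have "f \<in> C" using fQ Q_def by simp
        then have "f \<in> ladder_edges n" using C(3) unfolding alg_cycle_def by blast
        then have "insert f Y \<subseteq> ladder_edges n" using iY unfolding acm_indep_def by blast
        moreover have "\<not> acm_indep n (insert f Y)" using nf fQ Q_def by blast
        ultimately show "\<exists>A. alg_cycle n A \<and> A \<subseteq> insert f Y" unfolding acm_indep_def by blast
      qed
      have Q2: "finite Q" using C Q_def by simp
      have Q3: "x \<notin> Y" "x \<notin> Q" using Y_def Q_def by auto
      have Q4: "C \<subseteq> Y \<union> Q \<union> {x}" using Q_def by blast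
      obtain G' where G': "alg_cycle n G'" "G' \<subseteq> insert x Y"
        using exch_aux[OF Q2 Q1 Q3 iY Q4 xC C(3)] by blast
      have "insert x Y = S \<union> X" using Y_def x by blast
      then have "G' \<subseteq> S \<union> X" using G'(2) by simp
      then show False using less.prems(3) G'(1) unfolding acm_indep_def by blast
    qed
    then obtain f where f: "f \<in> C" "f \<notin> Y" "f \<noteq> x" "acm_indep n (insert f Y)" by blast
    define X1 where "X1 = insert f (X - {x})"
    have fSX: "f \<notin> S \<union> X" using f Y_def by blast
    have fF: "f \<in> F" using f C(2) by blast
    have "finite X1" using less.prems X1_def by simp
    moreover have "X1 \<inter> S = {}" using less.prems fSX X1_def by blast
    moreover have "acm_indep n (S \<union> X1)"
    proof -
      have "S \<union> X1 = insert f Y" using X1_def Y_def x less.prems(2) by blast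
      then show ?thesis using f by simp
    qed
    moreover have "card (X1 - F) < card (X - F)"
    proof -
      have "X1 - F = (X - F) - {x}" using X1_def fF by blast
      moreover have "x \<in> X - F" using x by simp
      ultimately show ?thesis using less.prems(1) card_Diff1_less[of "X - F" x] by simp
    qed
    ultimately obtain X' where X': "X' \<subseteq> F - S" "finite X'" "card X' = card X1" "acm_indep n (S \<union> X')"
      using less.hyps[of X1] by auto
    have "card X > 0" using x less.prems(1) card_gt_0_iff by blast
    then have "card X1 = card X" using X1_def fSX x less.prems(1) by (simp add: card_insert_if)
    then show ?thesis using X' by auto
  qed
qed



lemma base_fin_forest:
  assumes n: "n \<ge> 1" and F: "is_base (fin_indep (trunc_indep (acm_indep n) k)) F"
  shows "forest n F" "\<forall>x\<in>ladder_edges n - F. \<exists>C. finite C \<and> C \<subseteq> insert x F \<and> alg_cycle n C"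
proof -
  show fF: "forest n F" using F fin_indep_iff[OF n] unfolding is_base_def by blast
  show "\<forall>x\<in>ladder_edges n - F. \<exists>C. finite C \<and> C \<subseteq> insert x F \<and> alg_cycle n C"
  proof (rule ballI, rule ccontr)
    fix x assume x: "x \<in> ladder_edges n - F" and nC: "\<not> (\<exists>C. finite C \<and> C \<subseteq> insert x F \<and> alg_cycle n C)"
    have "forest n (insert x F)" using fF x nC unfolding forest_def by blast
    then have "fin_indep (trunc_indep (acm_indep n) k) (insert x F)" using fin_indep_iff[OF n] by blast
    then have "insert x F = F" using F unfolding is_base_def by blast
    then show False using x by blast
  qed
qed

lemma forest_base_intro:
  assumes n: "n \<ge> 1" and fF: "forest n F"
    and mx: "\<forall>x\<in>ladder_edges n - F. \<exists>C. finite C \<and> C \<subseteq> insert x F \<and> alg_cycle n C"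
  shows "is_base (fin_indep (trunc_indep (acm_indep n) k)) F"
  unfolding is_base_def
proof (intro conjI allI impI)
  show "fin_indep (trunc_indep (acm_indep n) k) F" using fF fin_indep_iff[OF n] by blast
  fix X assume X: "fin_indep (trunc_indep (acm_indep n) k) X" "F \<subseteq> X"
  have fX: "forest n X" using X(1) fin_indep_iff[OF n] by blast
  show "X = F"
  proof (rule ccontr)
    assume "X \<noteq> F"
    then obtain x where x: "x \<in> X" "x \<notin> F" using X(2) by blast
    then have "x \<in> ladder_edges n" using fX unfolding forest_def by blast
    then obtain C where C: "finite C" "C \<subseteq> insert x F" "alg_cycle n C" using mx x by blast
    have "C \<subseteq> X" using C(2) x X(2) by blast
    then show False using fX C unfolding forest_def by blast
  qed
qed

lemma upper:
  assumes n: "n \<ge> 1" and F: "is_base (fin_indep (trunc_indep (acm_indep n) k)) F"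
    and S: "is_base (trunc_indep (acm_indep n) k) S" and SF: "S \<subseteq> F"
  shows "ecard (F - S) \<le> enat (k + n)"
proof (rule ccontr)
  assume nle: "\<not> ?thesis"
  have fF: "forest n F" using base_fin_forest[OF n F] by blast
  have iS: "acm_indep n S" using S unfolding is_base_def trunc_indep_def by blast
  obtain Z where Z: "Z \<subseteq> F - S" "finite Z" "card Z = k + n + 1"
  proof (cases "finite (F - S)")
    case True
    then have "k + n + 1 \<le> card (F - S)" using nle unfolding ecard_def by simp
    then show ?thesis using that obtain_subset_with_card_n by metis
  next
    case False
    then show ?thesis using that infinite_arbitrarily_large by metis
  qed
  define P where "P j \<longleftrightarrow> (\<exists>C. alg_cycle n C \<and> C \<subseteq> S \<union> Z \<and> C \<subseteq> lad j)" for j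
  define Cj where "Cj j = (SOME C. alg_cycle n C \<and> C \<subseteq> S \<union> Z \<and> C \<subseteq> lad j)" for j
  define pick where "pick j = (SOME z. z \<in> Z \<and> z \<in> Cj j)" for j
  have Cj: "alg_cycle n (Cj j) \<and> Cj j \<subseteq> S \<union> Z \<and> Cj j \<subseteq> lad j" if "P j" for j
    using someI_ex[OF that[unfolded P_def]] unfolding Cj_def by blast
  have pick: "pick j \<in> Z \<and> pick j \<in> Cj j" if "P j" for j
  proof -
    have "\<not> Cj j \<subseteq> S" using Cj[OF that] iS unfolding acm_indep_def by blast
    then have "\<exists>z. z \<in> Z \<and> z \<in> Cj j" using Cj[OF that] by blast
    then show ?thesis unfolding pick_def by (rule someI_ex)
  qed
  define W where "W = pick ` {j. j < n \<and> P j}"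
  have "card W \<le> card {j. j < n \<and> P j}" unfolding W_def by (rule card_image_le) simp
  also have "\<dots> \<le> n" using card_mono[of "{..<n}" "{j. j < n \<and> P j}"] by auto
  finally have cW: "card W \<le> n" .
  have fW: "finite W" unfolding W_def by simp
  define Z' where "Z' = Z - W"
  have cZ': "k + 1 \<le> card Z'"
    using diff_card_le_card_Diff[OF fW, of Z] Z(3) cW unfolding Z'_def by linarith
  have SZF: "S \<union> Z \<subseteq> F" using SF Z(1) by blast
  have iSZ': "acm_indep n (S \<union> Z')"
    unfolding acm_indep_def
  proof (intro conjI notI)
    show "S \<union> Z' \<subseteq> ladder_edges n" using SZF fF unfolding forest_def Z'_def by blast
  next
    assume "\<exists>C\<subseteq>S \<union> Z'. alg_cycle n C"
    then obtain A where A: "A \<subseteq> S \<union> Z'" "alg_cycle n A" by blast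
    obtain e where "e \<in> A" using A unfolding alg_cycle_def by blast
    then obtain j i t where e: "(j,i,t) \<in> A" by (cases e) auto
    have jn: "j < n" using A(2) e unfolding alg_cycle_def by auto
    have Aj: "alg_cycle n (A \<inter> lad j)" using alg_cycle_restrict[OF A(2) e] .
    have AjSZ: "A \<inter> lad j \<subseteq> S \<union> Z" using A(1) Z'_def by blast
    then have Pj: "P j" using Aj unfolding P_def by blast
    have "A \<inter> lad j = Cj j"
      using unique_cycle[OF fF Aj _ _ Cj[OF Pj, THEN conjunct1]] AjSZ SZF Cj[OF Pj] by blast
    then have "pick j \<in> A" using pick[OF Pj] by blast
    moreover have "pick j \<in> W" using Pj jn unfolding W_def by blast
    moreover have "pick j \<notin> S" using pick[OF Pj] Z(1) by blast
    ultimately show False using A(1) Z'_def by blast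
  qed
  have fZ': "finite Z'" using Z(2) Z'_def by simp
  obtain Z'' where Z'': "Z'' \<subseteq> Z'" "card Z'' = Suc k" "finite Z''"
    using obtain_subset_with_card_n[of "Suc k" Z'] cZ' by auto
  have "Z'' \<inter> S = {}" using Z''(1) Z(1) Z'_def by blast
  moreover have "acm_indep n (S \<union> Z'')" by (rule acm_mono[OF iSZ']) (use Z''(1) in blast)
  ultimately show False using base_noext[OF S _ Z''(3,2)] by blast
qed

lemma lower:
  assumes n: "n \<ge> 1" and F: "is_base (fin_indep (trunc_indep (acm_indep n) k)) F"
    and S: "is_base (trunc_indep (acm_indep n) k) S" and SF: "S \<subseteq> F"
  shows "enat k \<le> ecard (F - S)"
proof (cases "finite (F - S)")
  case False then show ?thesis unfolding ecard_def by simp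
next
  case True
  obtain T where T: "acm_indep n T" "S \<subseteq> T" "finite (T - S)" "card (T - S) = k"
    using S unfolding is_base_def trunc_indep_def by blast
  have "S \<union> (T - S) = T" using T(2) by blast
  then obtain X' where X': "X' \<subseteq> F - S" "finite X'" "card X' = card (T - S)"
    using exchange[OF base_fin_forest[OF n F] SF T(3) _] T(1) by auto
  then have "k \<le> card (F - S)" using card_mono[OF True X'(1)] T(4) by simp
  then show ?thesis using True unfolding ecard_def by simp
qed



lemma ekW: "t \<noteq> RailU \<Longrightarrow> t \<noteq> Rung \<Longrightarrow> t = RailW"
  by (cases t) auto

lemma construction:
  assumes n: "n \<ge> 1" and dn: "d \<le> n"
  shows "\<exists>F S. S \<subseteq> F \<and> is_base (fin_indep (trunc_indep (acm_indep n) k)) F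
           \<and> is_base (trunc_indep (acm_indep n) k) S \<and> ecard (F - S) = enat (d + k)"
proof -
  define F where "F = {(j::nat,i::nat,t). j < n \<and> (t = RailU \<or> (t = RailW \<and> j < d) \<or> (t = Rung \<and> (j < d \<longrightarrow> i = 0)))}"
  define R0 where "R0 = {(j::nat,i::nat,t). j < d \<and> i = 0 \<and> t = Rung}"
  define K where "K = {(j::nat,i,t). j = 0 \<and> i < k \<and> t = RailU}"
  define B where "B = F - R0"
  define S where "S = B - K"
  have FE: "F \<subseteq> ladder_edges n" unfolding F_def ladder_edges_def by auto
  have fF: "forest n F"
    unfolding forest_def
  proof (intro conjI allI impI FE notI)
    fix C assume C: "C \<subseteq> F" "finite C" "alg_cycle n C"
    obtain e where "e \<in> C" using C(3) unfolding alg_cycle_def by blast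
    then obtain j q t where e: "(j,q,t) \<in> C" by (cases e) auto
    have jn: "j < n" using e C(1) unfolding F_def by auto
    have ev: "\<forall>i. evU C j i \<and> evW C j i" using C(3) jn unfolding alg_cycle_iff by blast
    obtain p where p: "p > 0" "(j,p,Rung) \<in> C" "(j,p-1,RailW) \<in> C" using maxpos[OF C(2) ev e] by blast
    have "j < d" using p(3) C(1) unfolding F_def by auto
    then show False using p(1,2) C(1) unfolding F_def by auto
  qed
  have mx: "\<forall>x\<in>ladder_edges n - F. \<exists>C. finite C \<and> C \<subseteq> insert x F \<and> alg_cycle n C"
  proof
    fix x assume x: "x \<in> ladder_edges n - F"
    obtain j i t where xe: "x = (j,i,t)" by (cases x) auto
    have jn: "j < n" using x xe by simp
    show "\<exists>C. finite C \<and> C \<subseteq> insert x F \<and> alg_cycle n C"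
    proof (cases t)
      case RailU then show ?thesis using x xe jn unfolding F_def by auto
    next
      case RailW
      then have jd: "\<not> j < d" using x xe jn unfolding F_def by auto
      define C where "C = {(j,i,RailU),(j,i,RailW),(j,i,Rung),(j,Suc i,Rung)}"
      have "finite C" unfolding C_def by simp
      moreover have "C \<subseteq> insert x F" using jd jn xe RailW unfolding C_def F_def by auto
      moreover have "alg_cycle n C"
        unfolding alg_cycle_iff
      proof (intro conjI allI impI)
        show "C \<noteq> {}" unfolding C_def by simp
        show "C \<subseteq> ladder_edges n" using jn unfolding C_def by simp
        fix j' i' assume "j' < n"
        show "evU C j' i'" unfolding evU_def C_def by auto
        show "evW C j' i'" unfolding evW_def C_def by auto
      qed
      ultimately show ?thesis by blast
    next
      case Rung
      then have jd: "j < d" "i \<noteq> 0" using x xe jn unfolding F_def by auto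
      define C where "C = {(j',i',t'). j' = j \<and> ((t' = Rung \<and> (i' = 0 \<or> i' = i)) \<or> (t' \<noteq> Rung \<and> i' < i))}"
      have "finite C"
        by (rule finite_subset[OF _ finite_upto[of j i]]) (auto simp: C_def)
      moreover have "C \<subseteq> insert x F" using jd jn xe Rung unfolding C_def F_def by (auto intro: ekW)
      moreover have "alg_cycle n C"
        unfolding alg_cycle_iff
      proof (intro conjI allI impI)
        show "C \<noteq> {}" unfolding C_def by auto
        show "C \<subseteq> ladder_edges n" using jn unfolding C_def ladder_edges_def by auto
        fix j' i' assume "j' < n"
        show "evU C j' i'" unfolding evU_def C_def using jd by auto
        show "evW C j' i'" unfolding evW_def C_def using jd by auto
      qed
      ultimately show ?thesis by blast
    qed
  qed
  have bF: "is_base (fin_indep (trunc_indep (acm_indep n) k)) F"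
    using forest_base_intro[OF n fF mx] .
  have iB: "acm_indep n B"
    unfolding acm_indep_def
  proof (intro conjI notI)
    show "B \<subseteq> ladder_edges n" using FE B_def by blast
  next
    assume "\<exists>C\<subseteq>B. alg_cycle n C"
    then obtain A where A: "A \<subseteq> B" "alg_cycle n A" by blast
    obtain e where "e \<in> A" using A(2) unfolding alg_cycle_def by blast
    then obtain j q t where e: "(j,q,t) \<in> A" by (cases e) auto
    have jn: "j < n" using e A(2) unfolding alg_cycle_def by auto
    have ev: "\<forall>i. evU A j i \<and> evW A j i" using A(2) jn unfolding alg_cycle_iff by blast
    show False
    proof (cases "j < d")
      case True
      have "\<forall>i. (j,i,Rung) \<notin> A" using A(1) True unfolding B_def F_def R0_def by auto
      then show False using norung_empty[OF ev] e by (cases t) auto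
    next
      case False
      have "\<forall>i. (j,i,RailW) \<notin> A" using A(1) False unfolding B_def F_def by auto
      then show False using noW_empty[OF ev] e by blast
    qed
  qed
  have KB: "K \<subseteq> B" using n unfolding K_def B_def F_def R0_def by auto
  have Keq: "K = (\<lambda>i. (0, i, RailU)) ` {..<k}" unfolding K_def by auto
  have fK: "finite K" and cK: "card K = k" unfolding Keq by (auto simp: card_image inj_on_def)
  have SF: "S \<subseteq> F" unfolding S_def B_def by blast
  have tS: "trunc_indep (acm_indep n) k S"
    unfolding trunc_indep_def
  proof (intro conjI exI)
    show "acm_indep n S" by (rule acm_mono[OF iB]) (auto simp: S_def)
    show "acm_indep n B" by fact
    show "S \<subseteq> B" unfolding S_def by blast
    have "B - S = K" using KB unfolding S_def by blast
    then show "finite (B - S)" "card (B - S) = k" using fK cK by auto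
  qed
  have FS: "F - S = R0 \<union> K" using KB unfolding S_def B_def F_def R0_def using dn by auto
  define D where "D j = {(j',i::nat,t). j' = j \<and> (t \<noteq> Rung \<or> i = 0)}" for j :: nat
  have D: "alg_cycle n (D j)" if "j < n" for j
    unfolding alg_cycle_iff
  proof (intro conjI allI impI)
    show "D j \<noteq> {}" unfolding D_def by auto
    show "D j \<subseteq> ladder_edges n" using that unfolding D_def ladder_edges_def by auto
    fix j' i' assume "j' < n"
    show "evU (D j) j' i'" unfolding evU_def D_def by auto
    show "evW (D j) j' i'" unfolding evW_def D_def by auto
  qed
  have bS: "is_base (trunc_indep (acm_indep n) k) S"
  proof (rule base_intro[OF tS])
    fix X assume X: "X \<inter> S = {}" "finite X" "card X = Suc k"
    show "\<not> acm_indep n (S \<union> X)"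
    proof
      assume iSX: "acm_indep n (S \<union> X)"
      obtain X' where X': "X' \<subseteq> F - S" "finite X'" "card X' = Suc k" "acm_indep n (S \<union> X')"
        using exchange[OF fF mx SF X(2,1) iSX] X(3) by auto
      have noD: "\<not> D j \<subseteq> S \<union> X'" if "j < n" for j
        using X'(4) D[OF that] unfolding acm_indep_def by blast
      have nR: "(j,0,Rung) \<notin> X'" if "0 < j" "j < d" for j
      proof
        assume "(j,0,Rung) \<in> X'"
        moreover have "D j \<subseteq> insert (j,0,Rung) S"
        proof
          fix e assume "e \<in> D j"
          then obtain i t where e: "e = (j,i,t)" "t \<noteq> Rung \<or> i = 0" unfolding D_def by auto
          show "e \<in> insert (j,0,Rung) S" using that dn e by (cases t) (auto simp: S_def B_def F_def R0_def K_def)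
        qed
        ultimately show False using noD[of j] that dn by auto
      qed
      show False
      proof (cases "d = 0")
        case True
        then have "X' \<subseteq> K" using X'(1) FS unfolding R0_def by auto
        then have "card X' \<le> card K" by (rule card_mono[OF fK])
        then show False using cK X'(3) by simp
      next
        case False
        have sub: "X' \<subseteq> insert (0,0,Rung) K"
        proof
          fix e assume eX: "e \<in> X'"
          then have "e \<in> R0 \<union> K" using X'(1) FS by blast
          then show "e \<in> insert (0,0,Rung) K"
          proof
            assume "e \<in> R0"
            then obtain j where j: "e = (j,0,Rung)" "j < d" unfolding R0_def by auto
            then have "j = 0" using nR[of j] eX by (cases "j = 0") auto
            then show ?thesis using j by simp
          qed simp
        qed
        have ne: "X' \<noteq> insert (0,0,Rung) K"
        proof
          assume eq: "X' = insert (0,0,Rung) K"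
          have "D 0 \<subseteq> S \<union> X'"
          proof
            fix e assume "e \<in> D 0"
            then obtain i t where e: "e = (0,i,t)" "t \<noteq> Rung \<or> i = 0" unfolding D_def by auto
            show "e \<in> S \<union> X'" using False dn n e unfolding eq by (cases t) (auto simp: S_def B_def F_def R0_def K_def)
          qed
          then show False using noD[of 0] n by auto
        qed
        have ps: "X' \<subset> insert (0,0,Rung) K" using sub ne by blast
        have "card X' < card (insert (0,0,Rung) K)"
          by (rule psubset_card_mono[OF _ ps]) (use fK in simp)
        moreover have "card (insert (0,0,Rung) K) = Suc k" using fK cK unfolding K_def by simp
        ultimately show False using X'(3) by simp
      qed
    qed
  qed
  have "R0 = (\<lambda>j. (j, 0, Rung)) ` {..<d}" unfolding R0_def by auto
  then have fR0: "finite R0" and cR0: "card R0 = d" by (auto simp: card_image inj_on_def)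
  have "R0 \<inter> K = {}" unfolding R0_def K_def by auto
  then have "card (F - S) = d + k" unfolding FS using card_Un_disjoint[OF fR0 fK] cR0 cK by simp
  moreover have "finite (F - S)" unfolding FS using fR0 fK by simp
  ultimately have "ecard (F - S) = enat (d + k)" unfolding ecard_def by simp
  then show ?thesis using SF bF bS by blast
qed


theorem proposition3p3p2:
  fixes n k :: nat
  assumes "n \<ge> 1"
  shows "Spec (trunc_indep (acm_indep n) k) = {enat k .. enat (k + n)}"
proof (rule set_eqI, rule iffI)
  fix x assume "x \<in> Spec (trunc_indep (acm_indep n) k)"
  then obtain F B where FB: "x = ecard (F - B)" "B \<subseteq> F"
    "is_base (fin_indep (trunc_indep (acm_indep n) k)) F" "is_base (trunc_indep (acm_indep n) k) B"
    unfolding Spec_def by blast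
  show "x \<in> {enat k .. enat (k + n)}"
    using lower[OF assms FB(3,4,2)] upper[OF assms FB(3,4,2)] FB(1) by simp
next
  fix x assume x: "x \<in> {enat k .. enat (k + n)}"
  then obtain m where m: "x = enat m" by (cases x) auto
  have km: "k \<le> m" "m \<le> k + n" using x m by auto
  obtain F S where FS: "S \<subseteq> F" "is_base (fin_indep (trunc_indep (acm_indep n) k)) F"
      "is_base (trunc_indep (acm_indep n) k) S" "ecard (F - S) = enat ((m - k) + k)"
  proof -
    have "m - k \<le> n" using km by simp
    then show ?thesis using construction[OF assms, of "m - k" k] that by blast
  qed
  have "ecard (F - S) = x" using FS(4) km m by simp
  then show "x \<in> Spec (trunc_indep (acm_indep n) k)" unfolding Spec_def using FS by blast
qed

end
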